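(* Let $\mathbf{X}$ be either an $N$-sgrm over $\mathbb{R}^d$, or a good sgrm with $\dot{\mathbf{X}}_{s,s}\in\mathcal{L}^N(\mathbb{R}^d)$ for all $s$, and let $\mathfrak{B}^N$ be an orthonormal basis of $\mathcal{L}^N(\mathbb{R}^d)\subset T^N(\mathbb{R}^d)$. Then a smooth path $Y:[0,T]\to\mathbb{R}^e$ solves $dY=f(Y)\,d\mathbf{X}$ if and only if $$\dot Y_s=\sum_{\mathfrak{u}\in\mathfrak{B}^N}f_{\mathfrak{u}}(Y_s)\langle\dot{\mathbf{X}}_{s,s},\mathfrak{u}\rangle\quad\text{for all }s\in[0,T].$$
   Context: Fix $T>0$, $d,e\ge1$. $T((\mathbb{R}^d))$: formal tensor series over words in $\{1,\dots,d\}$ (incl. empty word $\mathbf{1}$), concatenation $\otimes$; $T^N(\mathbb{R}^d)$: span of words of length $\le N$ with truncated product $\otimes_N$, projection $\mathrm{proj}_N$; $\langle\mathbf{x},w\rangle$ the coefficient of $w$, extended bilinearly; $T^N(\mathbb{R}^d)$ carries the inner product making words orthonormal. Shuffle: bilinear, unit $\mathbf{1}$, $wi\sqcup\!\sqcup vj=(w\sqcup\!\sqcup vj)i+(wi\sqcup\!\sqcup v)j$. $\mathcal{L}(\mathbb{R}^d)$: Lie polynomials generated by the letters; $\mathcal{L}^N(\mathbb{R}^d)=\mathrm{proj}_N\mathcal{L}(\mathbb{R}^d)$. $N$-sgrm: non-zero $\mathbf{X}:[0,T]^2\to T^N(\mathbb{R}^d)$ with the shuffle relation $\langle\mathbf{X}_{s,t},v\sqcup\!\sqcup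 w\rangle=\langle\mathbf{X}_{s,t},v\rangle\langle\mathbf{X}_{s,t},w\rangle$ ($|v|+|w|\le N$), Chen's relation $\mathbf{X}_{s,u}\otimes_N\mathbf{X}_{u,t}=\mathbf{X}_{s,t}$, and smooth $t\mapsto\langle\mathbf{X}_{s,t},w\rangle$; sgrm: same in $T((\mathbb{R}^d))$ for all words with $\otimes$. Diagonal derivative $\dot{\mathbf{X}}_{s,s}=\partial_t|_{t=s}\mathbf{X}_{s,t}$. A good sgrm is the minimal extension of some $N'$-sgrm $\mathbf{Y}$, i.e. the unique sgrm agreeing with $\mathbf{Y}$ on words of length $\le N'$ whose diagonal derivative lies in $\mathcal{L}^{N'}(\mathbb{R}^d)$. Vector fields: $(f_1,\dots,f_d)$ smooth on $\mathbb{R}^e$ with bounded derivatives; $f\vartriangleright g:=f^i(\partial_ig^j)\partial_j$; $f_{\mathbf{1}}=\mathrm{id}$, $f_{\ell_1\cdots\ell_n}:=f_{\ell_1}\vartriangleright(\cdots\vartriangleright(f_{\ell_{n-1}}\vartriangleright f_{\ell_n})\cdots)$; for $\mathbf{x}\in T(\mathbb{R}^d)$, $f_{\mathbf{x}}:=\sum_w\langle\mathbf{x},w\rangle f_w$. For such $\mathbf{X}$, "$Y$ solves $dY=f(Y)d\mathbf{X}$" means $Y$ is smooth and $\dot Y_s=\sum_{|w|\le N}f_w(Y_s)\langle\dot{\mathbf{X}}_{s,s},w\rangle$ for all $s$. *)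

theory Defs
  imports "HOL-Analysis.Analysis"
begin

text \<open>Words over the alphabet {1..d} are lists of naturals; tensor series are
functions from words to reals (supported on words over the alphabet).\<close>

definition words :: "nat \<Rightarrow> nat \<Rightarrow> nat list set" where
  "words d N = {w. set w \<subseteq> {1..d} \<and> length w \<le> N}"

definition in_T :: "nat \<Rightarrow> (nat list \<Rightarrow> real) \<Rightarrow> bool" where
  "in_T d x \<longleftrightarrow> (\<forall>w. \<not> set w \<subseteq> {1..d} \<longrightarrow> x w = 0)"

definition in_TN :: "nat \<Rightarrow> nat \<Rightarrow> (nat list \<Rightarrow> real) \<Rightarrow> bool" where
  "in_TN d N x \<longleftrightarrow> (\<forall>w. w \<notin> words d N \<longrightarrow> x w = 0)"

definition tmul :: "(nat list \<Rightarrow> real) \<Rightarrow> (nat list \<Rightarrow> real) \<Rightarrow> nat list \<Rightarrow> real" where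
  "tmul x y w = (\<Sum>i\<le>length w. x (take i w) * y (drop i w))"

definition tmulN :: "nat \<Rightarrow> (nat list \<Rightarrow> real) \<Rightarrow> (nat list \<Rightarrow> real) \<Rightarrow> nat list \<Rightarrow> real" where
  "tmulN N x y w = (if length w \<le> N then tmul x y w else 0)"

definition proj :: "nat \<Rightarrow> (nat list \<Rightarrow> real) \<Rightarrow> nat list \<Rightarrow> real" where
  "proj N x w = (if length w \<le> N then x w else 0)"

text \<open>Shuffle with multiplicities (first-letter recursion), then reversed
to obtain the last-letter recursion of the paper:
  shuffle (w@[i]) (v@[j]) = (shuffle w (v@[j]))i + (shuffle (w@[i]) v)j.\<close>
fun shf :: "nat list \<Rightarrow> nat list \<Rightarrow> nat list list" where
  "shf [] w = [w]"
| "shf v [] = [v]"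
| "shf (a # v) (b # w) = map (Cons a) (shf v (b # w)) @ map (Cons b) (shf (a # v) w)"

definition shuffle :: "nat list \<Rightarrow> nat list \<Rightarrow> nat list list" where
  "shuffle v w = map rev (shf (rev v) (rev w))"

text \<open>Pairing of a tensor with a formal sum of words (given as a list).\<close>
definition pair :: "(nat list \<Rightarrow> real) \<Rightarrow> nat list list \<Rightarrow> real" where
  "pair x ws = sum_list (map x ws)"

definition letter :: "nat \<Rightarrow> nat list \<Rightarrow> real" where
  "letter i = (\<lambda>w. if w = [i] then 1 else 0)"

inductive_set lie :: "nat \<Rightarrow> (nat list \<Rightarrow> real) set" for d where
  lie_letter: "i \<in> {1..d} \<Longrightarrow> letter i \<in> lie d"
| lie_zero: "(\<lambda>w. 0) \<in> lie d"
| lie_add: "x \<in> lie d \<Longrightarrow> y \<in> lie d \<Longrightarrow> (\<lambda>w. x w + y w) \<in> lie d"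
| lie_scale: "x \<in> lie d \<Longrightarrow> (\<lambda>w. c * x w) \<in> lie d"
| lie_bracket: "x \<in> lie d \<Longrightarrow> y \<in> lie d \<Longrightarrow> (\<lambda>w. tmul x y w - tmul y x w) \<in> lie d"

definition lieN :: "nat \<Rightarrow> nat \<Rightarrow> (nat list \<Rightarrow> real) set" where
  "lieN d N = proj N ` lie d"

definition ipN :: "nat \<Rightarrow> nat \<Rightarrow> (nat list \<Rightarrow> real) \<Rightarrow> (nat list \<Rightarrow> real) \<Rightarrow> real" where
  "ipN d N x y = (\<Sum>w\<in>words d N. x w * y w)"

definition onb_lieN :: "nat \<Rightarrow> nat \<Rightarrow> (nat list \<Rightarrow> real) set \<Rightarrow> bool" where
  "onb_lieN d N B \<longleftrightarrow> finite B \<and> B \<subseteq> lieN d N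
     \<and> (\<forall>u\<in>B. \<forall>v\<in>B. ipN d N u v = (if u = v then 1 else 0))
     \<and> (\<forall>x\<in>lieN d N. \<exists>c. x = (\<lambda>w. \<Sum>u\<in>B. c u * u w))"

definition smooth_on :: "real set \<Rightarrow> (real \<Rightarrow> 'a::real_normed_vector) \<Rightarrow> bool" where
  "smooth_on S g \<longleftrightarrow> (\<exists>D :: nat \<Rightarrow> real \<Rightarrow> 'a. (\<forall>x\<in>S. D 0 x = g x) \<and>
      (\<forall>k. \<forall>x\<in>S. (D k has_vector_derivative D (Suc k) x) (at x within S)))"

text \<open>Smooth vector field with bounded derivatives (of all orders \<ge> 1):
D vs y is the iterated derivative of g at y in the directions vs.\<close>
definition smooth_bdd_field :: "('a::euclidean_space \<Rightarrow> 'a) \<Rightarrow> bool" where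
  "smooth_bdd_field g \<longleftrightarrow> (\<exists>D :: 'a list \<Rightarrow> 'a \<Rightarrow> 'a. D [] = g \<and>
      (\<forall>vs y. (D vs has_derivative (\<lambda>v. D (v # vs) y)) (at y)) \<and>
      (\<forall>vs. vs \<noteq> [] \<longrightarrow> bounded (range (D vs))))"

definition Nsgrm :: "nat \<Rightarrow> nat \<Rightarrow> real \<Rightarrow> (real \<Rightarrow> real \<Rightarrow> nat list \<Rightarrow> real) \<Rightarrow> bool" where
  "Nsgrm d N T X \<longleftrightarrow>
     (\<exists>s\<in>{0..T}. \<exists>t\<in>{0..T}. X s t \<noteq> (\<lambda>w. 0))
   \<and> (\<forall>s\<in>{0..T}. \<forall>t\<in>{0..T}. in_TN d N (X s t))
   \<and> (\<forall>s\<in>{0..T}. \<forall>t\<in>{0..T}. \<forall>v w. set v \<subseteq> {1..d} \<longrightarrow> set w \<subseteq> {1..d} \<longrightarrow>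
        length v + length w \<le> N \<longrightarrow> pair (X s t) (shuffle v w) = X s t v * X s t w)
   \<and> (\<forall>s\<in>{0..T}. \<forall>u\<in>{0..T}. \<forall>t\<in>{0..T}. tmulN N (X s u) (X u t) = X s t)
   \<and> (\<forall>s\<in>{0..T}. \<forall>w. smooth_on {0..T} (\<lambda>t. X s t w))"

definition sgrm :: "nat \<Rightarrow> real \<Rightarrow> (real \<Rightarrow> real \<Rightarrow> nat list \<Rightarrow> real) \<Rightarrow> bool" where
  "sgrm d T X \<longleftrightarrow>
     (\<exists>s\<in>{0..T}. \<exists>t\<in>{0..T}. X s t \<noteq> (\<lambda>w. 0))
   \<and> (\<forall>s\<in>{0..T}. \<forall>t\<in>{0..T}. in_T d (X s t))
   \<and> (\<forall>s\<in>{0..T}. \<forall>t\<in>{0..T}. \<forall>v w. set v \<subseteq> {1..d} \<longrightarrow> set w \<subseteq> {1..d} \<longrightarrow>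
        pair (X s t) (shuffle v w) = X s t v * X s t w)
   \<and> (\<forall>s\<in>{0..T}. \<forall>u\<in>{0..T}. \<forall>t\<in>{0..T}. tmul (X s u) (X u t) = X s t)
   \<and> (\<forall>s\<in>{0..T}. \<forall>w. smooth_on {0..T} (\<lambda>t. X s t w))"

definition diag_deriv :: "real \<Rightarrow> (real \<Rightarrow> real \<Rightarrow> nat list \<Rightarrow> real) \<Rightarrow> real \<Rightarrow> nat list \<Rightarrow> real" where
  "diag_deriv T X s = (\<lambda>w. vector_derivative (\<lambda>t. X s t w) (at s within {0..T}))"

text \<open>Good sgrm: minimal extension of some N'-sgrm Y, i.e. an sgrm agreeing
with Y on words of length \<le> N' whose diagonal derivative lies in L^{N'}.\<close>
definition good_sgrm :: "nat \<Rightarrow> real \<Rightarrow> (real \<Rightarrow> real \<Rightarrow> nat list \<Rightarrow> real) \<Rightarrow> bool" where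
  "good_sgrm d T X \<longleftrightarrow> sgrm d T X \<and>
     (\<exists>N' Y. Nsgrm d N' T Y
        \<and> (\<forall>s\<in>{0..T}. \<forall>t\<in>{0..T}. \<forall>w. length w \<le> N' \<longrightarrow> X s t w = Y s t w)
        \<and> (\<forall>s\<in>{0..T}. diag_deriv T X s \<in> lieN d N'))"

definition vf_act :: "('a::euclidean_space \<Rightarrow> 'a) \<Rightarrow> ('a \<Rightarrow> 'a) \<Rightarrow> 'a \<Rightarrow> 'a" where
  "vf_act f g = (\<lambda>y. frechet_derivative g (at y) (f y))"

fun fw :: "(nat \<Rightarrow> 'a::euclidean_space \<Rightarrow> 'a) \<Rightarrow> nat list \<Rightarrow> 'a \<Rightarrow> 'a" where
  "fw f [] = id"
| "fw f [l] = f l"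
| "fw f (l # v # w) = vf_act (f l) (fw f (v # w))"

definition fx :: "(nat \<Rightarrow> 'a::euclidean_space \<Rightarrow> 'a) \<Rightarrow> nat \<Rightarrow> nat \<Rightarrow> (nat list \<Rightarrow> real) \<Rightarrow> 'a \<Rightarrow> 'a" where
  "fx f d N x y = (\<Sum>w\<in>words d N. x w *\<^sub>R fw f w y)"

definition solves :: "real \<Rightarrow> nat \<Rightarrow> nat \<Rightarrow> (nat \<Rightarrow> 'a::euclidean_space \<Rightarrow> 'a)
    \<Rightarrow> (real \<Rightarrow> real \<Rightarrow> nat list \<Rightarrow> real) \<Rightarrow> (real \<Rightarrow> 'a) \<Rightarrow> bool" where
  "solves T d N f X Y \<longleftrightarrow> smooth_on {0..T} Y \<and>
     (\<forall>s\<in>{0..T}. vector_derivative Y (at s within {0..T})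
        = (\<Sum>w\<in>words d N. diag_deriv T X s w *\<^sub>R fw f w (Y s)))"

end

theory Submission imports Defs begin

lemma count_shf_Nil: "count_list (shf p q) [] = (if p = [] \<and> q = [] then 1 else 0)"
proof (induction p q rule: shf.induct)
  case (1 w) then show ?case by (cases w) auto
next
  case (2 v) then show ?case by auto
next
  case (3 a v b w)
  have "\<And>L (c::nat). count_list (map (Cons c) L) [] = 0" by (induct_tac L) auto
  then show ?case by (simp add: count_list_append)
qed

lemma count_map_Cons: "count_list (map (Cons a) L) (c # y) = (if a = c then count_list L y else 0)"
  by (induction L) auto

lemma count_shf_Cons: "count_list (shf p q) (c # y) =
   (if p \<noteq> [] \<and> hd p = c then count_list (shf (tl p) q) y else 0) +
   (if q \<noteq> [] \<and> hd q = c then count_list (shf p (tl q)) y else 0)"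
proof (cases p)
  case Nil then show ?thesis by (cases q) auto
next
  case (Cons a v) note pc = this
  then show ?thesis
  proof (cases q)
    case Nil then show ?thesis using pc by (cases v) auto
  next
    case (Cons b w) then show ?thesis using pc by (simp add: count_list_append count_map_Cons)
  qed
qed

lemma count_map_rev: "count_list (map rev L) y = count_list L (rev y)"
  by (induction L) auto

lemma count_shuffle_snoc: "count_list (shuffle u v) (w @ [a]) =
   (if u \<noteq> [] \<and> last u = a then count_list (shuffle (butlast u) v) w else 0) +
   (if v \<noteq> [] \<and> last v = a then count_list (shuffle u (butlast v)) w else 0)"
proof -
  have t: "\<And>u::nat list. tl (rev u) = rev (butlast u)" by (induct_tac u rule: rev_induct) auto
  show ?thesis unfolding shuffle_def count_map_rev using count_shf_Cons[of "rev u" "rev v" a "rev w"]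
    by (simp add: hd_rev t)
qed

lemma count_shuffle_Nil: "count_list (shuffle u v) [] = (if u = [] \<and> v = [] then 1 else 0)"
  unfolding shuffle_def count_map_rev using count_shf_Nil[of "rev u" "rev v"] by simp

lemma shf_len: "x \<in> set (shf p q) \<Longrightarrow> length x = length p + length q \<and> set x \<subseteq> set p \<union> set q"
  by (induction p q arbitrary: x rule: shf.induct) (auto, blast+)

lemma shuffle_len: "x \<in> set (shuffle p q) \<Longrightarrow> length x = length p + length q \<and> set x \<subseteq> set p \<union> set q"
  unfolding shuffle_def using shf_len[of "rev x" "rev p" "rev q"] by auto

definition S :: "nat \<Rightarrow> nat list \<Rightarrow> nat list list" where
  "S k z = shuffle (rev (take k z)) (drop k z)"

lemma S_snoc:
  assumes "z \<noteq> []" "k \<le> length z"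
  shows "count_list (S k z) (w @ [a]) =
    (if 1 \<le> k \<and> hd z = a then count_list (S (k - 1) (tl z)) w else 0) +
    (if k < length z \<and> last z = a then count_list (S k (butlast z)) w else 0)"
proof -
  have e1: "(rev (take k z) \<noteq> [] \<and> last (rev (take k z)) = a) = (1 \<le> k \<and> hd z = a)"
    using assms by (cases z; cases k) auto
  have e2: "1 \<le> k \<Longrightarrow> butlast (rev (take k z)) = rev (take (k - 1) (tl z))"
    using assms by (cases z; cases k) (auto simp: butlast_rev)
  have e3: "(drop k z \<noteq> [] \<and> last (drop k z) = a) = (k < length z \<and> last z = a)"
    using assms by (auto simp: last_drop)
  have e4: "k < length z \<Longrightarrow> butlast (drop k z) = drop k (butlast z) \<and> take k z = take k (butlast z)"
    using assms by (simp add: butlast_drop take_butlast)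
  have e5: "1 \<le> k \<Longrightarrow> drop (k - 1) (tl z) = drop k z"
    using assms by (cases z; cases k) auto
  show ?thesis unfolding S_def count_shuffle_snoc
    using e1 e2 e3 e4 e5 by (auto simp del: rev_is_Nil_conv)
qed

lemma S_sum_snoc:
  fixes g :: "nat \<Rightarrow> real"
  assumes "z \<noteq> []"
  shows "(\<Sum>k\<le>length z. g k * count_list (S k z) (w @ [a])) =
    (if hd z = a then (\<Sum>j\<le>length z - 1. g (Suc j) * count_list (S j (tl z)) w) else 0) +
    (if last z = a then (\<Sum>k\<le>length z - 1. g k * count_list (S k (butlast z)) w) else 0)"
proof -
  obtain m where m: "length z = Suc m" using assms by (cases z) auto
  have "(\<Sum>k\<le>length z. g k * count_list (S k z) (w @ [a])) =
    (\<Sum>k\<le>Suc m. g k * (if 1 \<le> k \<and> hd z = a then count_list (S (k - 1) (tl z)) w else 0)) +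
    (\<Sum>k\<le>Suc m. g k * (if k < Suc m \<and> last z = a then count_list (S k (butlast z)) w else 0))"
    unfolding m[symmetric] sum.distrib[symmetric]
    by (rule sum.cong) (auto simp: S_snoc[OF assms] distrib_left)
  also have "(\<Sum>k\<le>Suc m. g k * (if 1 \<le> k \<and> hd z = a then count_list (S (k - 1) (tl z)) w else 0))
     = (if hd z = a then (\<Sum>j\<le>m. g (Suc j) * count_list (S j (tl z)) w) else 0)"
    unfolding sum.atMost_Suc_shift by (auto intro: sum.cong)
  also have "(\<Sum>k\<le>Suc m. g k * (if k < Suc m \<and> last z = a then count_list (S k (butlast z)) w else 0))
     = (if last z = a then (\<Sum>k\<le>m. g k * count_list (S k (butlast z)) w) else 0)"
    unfolding sum.atMost_Suc by (auto intro: sum.cong)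
  finally show ?thesis using m by simp
qed

lemma S_Nil_count: "k \<le> length z \<Longrightarrow> count_list (S k z) [] = (if k = 0 \<and> z = [] then 1 else 0)"
  unfolding S_def count_shuffle_Nil by auto

lemma antipode:
  "(\<Sum>k\<le>length z. (-1::real) ^ k * count_list (S k z) w) = (if z = [] \<and> w = [] then 1 else 0)"
proof (induction w arbitrary: z rule: rev_induct)
  case Nil
  have "(\<Sum>k\<le>length z. (-1::real) ^ k * count_list (S k z) []) =
        (\<Sum>k\<le>length z. if k = 0 then (if z = [] then 1 else 0) else 0)"
    by (rule sum.cong) (auto simp: S_Nil_count)
  then show ?case by simp
next
  case (snoc a w)
  show ?case
  proof (cases "z = []")
    case True
    then show ?thesis by (simp add: S_def shuffle_def)
  next
    case False
    have "(\<Sum>k\<le>length z. (-1::real) ^ k * count_list (S k z) (w @ [a])) =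
      (if hd z = a then (\<Sum>j\<le>length (tl z). (-1) ^ Suc j * count_list (S j (tl z)) w) else 0) +
      (if last z = a then (\<Sum>k\<le>length (butlast z). (-1) ^ k * count_list (S k (butlast z)) w) else 0)"
      using S_sum_snoc[OF False, of "\<lambda>k. (-1::real)^k"] by simp
    also have "\<dots> = (if hd z = a then - (if tl z = [] \<and> w = [] then 1 else 0) else 0) +
       (if last z = a then (if butlast z = [] \<and> w = [] then 1 else 0) else 0)"
      using snoc.IH[of "tl z"] snoc.IH[of "butlast z"] by (simp add: sum_negf)
    also have "\<dots> = 0" using False by (cases z) (auto simp: butlast_conv_take)
    finally show ?thesis using False by simp
  qed
qed

fun Rr :: "nat list \<Rightarrow> nat list \<Rightarrow> real" where
  "Rr [] = (\<lambda>_. 0)"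
| "Rr [a] = letter a"
| "Rr (a # b # u) = (\<lambda>z. tmul (Rr (b # u)) (letter a) z - tmul (letter a) (Rr (b # u)) z)"

definition R :: "nat list \<Rightarrow> nat list \<Rightarrow> real" where
  "R w = Rr (rev w)"

lemma R_single: "R [a] = letter a" by (simp add: R_def)

lemma R_snoc: "w \<noteq> [] \<Longrightarrow> R (w @ [a]) = (\<lambda>z. tmul (R w) (letter a) z - tmul (letter a) (R w) z)"
  unfolding R_def by (cases "rev w") auto

lemma tmul_letter_right: "tmul y (letter a) z = (if z \<noteq> [] \<and> last z = a then y (butlast z) else 0)"
proof -
  have "\<And>i. i \<in> {..length z} \<Longrightarrow> y (take i z) * letter a (drop i z) =
     (if i = length z - 1 then (if z \<noteq> [] \<and> last z = a then y (butlast z) else 0) else 0)"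
  proof -
    fix i assume i: "i \<in> {..length z}"
    show "y (take i z) * letter a (drop i z) =
     (if i = length z - 1 then (if z \<noteq> [] \<and> last z = a then y (butlast z) else 0) else 0)"
    proof (cases "z = []")
      case True then show ?thesis by (simp add: letter_def)
    next
      case False
      then obtain z' b where zz: "z = z' @ [b]" by (metis rev_exhaust)
      show ?thesis
      proof -
        have i': "i \<le> Suc (length z')" using i zz by simp
        have "i = length z' \<or> i = Suc (length z') \<or> i < length z'" using i' by linarith
        moreover have "i < length z' \<Longrightarrow> drop i (z' @ [b]) \<noteq> [a]"
        proof
          assume "i < length z'" "drop i (z' @ [b]) = [a]"
          then have "length (drop i (z' @ [b])) \<ge> 2" by simp
          then show False using \<open>drop i (z' @ [b]) = [a]\<close> by (metis One_nat_def Suc_1 Suc_n_not_le_n length_Cons list.size(3))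
        qed
        ultimately show ?thesis unfolding zz letter_def by auto
      qed
    qed
  qed
  then have "tmul y (letter a) z = (\<Sum>i\<in>{..length z}. (if i = length z - 1 then (if z \<noteq> [] \<and> last z = a then y (butlast z) else 0) else 0))"
    unfolding tmul_def by (rule sum.cong[OF refl])
  then show ?thesis by (simp add: sum.delta)
qed

lemma tmul_letter_left: "tmul (letter a) y z = (if z \<noteq> [] \<and> hd z = a then y (tl z) else 0)"
proof -
  have "\<And>i. i \<in> {..length z} \<Longrightarrow> letter a (take i z) * y (drop i z) =
     (if i = 1 then (if z \<noteq> [] \<and> hd z = a then y (tl z) else 0) else 0)"
  proof -
    fix i assume i: "i \<in> {..length z}"
    show "letter a (take i z) * y (drop i z) =
     (if i = 1 then (if z \<noteq> [] \<and> hd z = a then y (tl z) else 0) else 0)"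
    proof (cases z)
      case Nil then show ?thesis using i by (simp add: letter_def)
    next
      case (Cons b z')
      have "i = 0 \<or> i = 1 \<or> i \<ge> 2" by linarith
      moreover have "i \<ge> 2 \<Longrightarrow> take i z \<noteq> [a]"
      proof
        assume "i \<ge> 2" "take i z = [a]"
        then have "length (take i z) = 1" by simp
        then show False using i \<open>i \<ge> 2\<close> by simp
      qed
      ultimately show ?thesis unfolding Cons letter_def by auto
    qed
  qed
  then have "tmul (letter a) y z = (\<Sum>i\<in>{..length z}. (if i = 1 then (if z \<noteq> [] \<and> hd z = a then y (tl z) else 0) else 0))"
    unfolding tmul_def by (rule sum.cong[OF refl])
  also have "\<dots> = (if 1 \<in> {..length z} then (if z \<noteq> [] \<and> hd z = a then y (tl z) else 0) else 0)"
    by (rule sum.delta) simp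
  also have "(1 \<in> {..length z}) = (z \<noteq> [])" by (cases z) auto
  finally show ?thesis by simp
qed

lemma R_formula:
  "w \<noteq> [] \<Longrightarrow> R w z = (\<Sum>k\<le>length z. (-1::real) ^ k * real (length z - k) * count_list (S k z) w)"
proof (induction w arbitrary: z rule: rev_induct)
  case Nil then show ?case by simp
next
  case (snoc a w)
  show ?case
  proof (cases "z = []")
    case True
    then show ?thesis
    proof (cases "w = []")
      case True
      then show ?thesis using \<open>z = []\<close> by (simp add: R_single letter_def)
    next
      case False
      then show ?thesis using \<open>z = []\<close> by (simp add: R_snoc tmul_letter_left tmul_letter_right)
    qed
  next
    case zne: False
    have L: "(\<Sum>k\<le>length z. (-1::real) ^ k * real (length z - k) * count_list (S k z) (w @ [a])) =
      (if hd z = a then (\<Sum>j\<le>length z - 1. (-1) ^ Suc j * real (length z - Suc j) * count_list (S j (tl z)) w) else 0) +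
      (if last z = a then (\<Sum>k\<le>length z - 1. (-1) ^ k * real (length z - k) * count_list (S k (butlast z)) w) else 0)"
      using S_sum_snoc[OF zne, of "\<lambda>k. (-1::real)^k * real (length z - k)"] by simp
    show ?thesis
    proof (cases "w = []")
      case True
      have "(\<Sum>j\<le>length z - 1. (-1::real) ^ Suc j * real (length z - Suc j) * count_list (S j (tl z)) w)
         = (\<Sum>j\<le>length z - 1. if j = 0 then (if tl z = [] then - real (length z - 1) else 0) else 0)"
        using True by (intro sum.cong) (auto simp: S_Nil_count)
      also have "\<dots> = 0" using zne by (cases z) auto
      finally have A: "(\<Sum>j\<le>length z - 1. (-1::real) ^ Suc j * real (length z - Suc j) * count_list (S j (tl z)) w) = 0" .
      have "(\<Sum>k\<le>length z - 1. (-1::real) ^ k * real (length z - k) * count_list (S k (butlast z)) w)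
         = (\<Sum>k\<le>length z - 1. if k = 0 then (if butlast z = [] then real (length z) else 0) else 0)"
        using True by (intro sum.cong) (auto simp: S_Nil_count)
      also have "\<dots> = (if butlast z = [] then 1 else 0)" using zne by (cases z) auto
      finally have B: "(\<Sum>k\<le>length z - 1. (-1::real) ^ k * real (length z - k) * count_list (S k (butlast z)) w)
         = (if butlast z = [] then 1 else 0)" .
      have "R (w @ [a]) z = (if z = [a] then 1 else 0)" using True by (simp add: R_single letter_def)
      also have "\<dots> = (if last z = a then (if butlast z = [] then 1 else 0) else 0)"
        using zne by (metis append_butlast_last_id append_self_conv2 butlast.simps(2) last_ConsL)
      finally show ?thesis unfolding L A B by simp
    next
      case wne: False
      have A: "(\<Sum>j\<le>length z - 1. (-1::real) ^ Suc j * real (length z - Suc j) * count_list (S j (tl z)) w)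
          = - R w (tl z)"
        unfolding snoc.IH[OF wne] by (simp add: sum_negf[symmetric])
      have "(\<Sum>k\<le>length z - 1. (-1::real) ^ k * real (length z - k) * count_list (S k (butlast z)) w)
         = (\<Sum>k\<le>length z - 1. (-1::real) ^ k * real (length (butlast z) - k) * count_list (S k (butlast z)) w
            + (-1::real) ^ k * count_list (S k (butlast z)) w)"
      proof (intro sum.cong refl)
        fix k assume k: "k \<in> {..length z - 1}"
        have "real (length z - k) = real (length (butlast z) - k) + 1"
        proof -
          have "Suc k \<le> length z" "k \<le> length z" using k zne by (cases z; auto)+
          then show ?thesis by (simp add: of_nat_diff)
        qed
        then show "(-1::real) ^ k * real (length z - k) * count_list (S k (butlast z)) w =
          (-1::real) ^ k * real (length (butlast z) - k) * count_list (S k (butlast z)) w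
            + (-1::real) ^ k * count_list (S k (butlast z)) w" by (simp add: algebra_simps)
      qed
      also have "\<dots> = R w (butlast z)"
        unfolding sum.distrib length_butlast[symmetric] snoc.IH[OF wne] antipode using wne by simp
      finally have B: "(\<Sum>k\<le>length z - 1. (-1::real) ^ k * real (length z - k) * count_list (S k (butlast z)) w)
         = R w (butlast z)" .
      show ?thesis unfolding L A B using wne zne by (simp add: R_snoc tmul_letter_left tmul_letter_right)
    qed
  qed
qed

lemma R_lie: "w \<noteq> [] \<Longrightarrow> set w \<subseteq> {1..d} \<Longrightarrow> R w \<in> lie d"
proof (induction w rule: rev_induct)
  case Nil then show ?case by simp
next
  case (snoc a w)
  show ?case
  proof (cases "w = []")
    case True then show ?thesis using snoc.prems by (simp add: R_single lie_letter)
  next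
    case False
    then show ?thesis using snoc by (simp add: R_snoc lie_bracket lie_letter)
  qed
qed

lemma lie_sum: "finite A \<Longrightarrow> (\<forall>a\<in>A. g a \<in> lie d) \<Longrightarrow> (\<lambda>z. \<Sum>a\<in>A. c a * g a z) \<in> lie d"
proof (induction A rule: finite_induct)
  case empty then show ?case using lie_zero by simp
next
  case (insert a A)
  have "(\<lambda>z. (\<lambda>z. c a * g a z) z + (\<lambda>z. \<Sum>a\<in>A. c a * g a z) z) \<in> lie d"
    by (rule lie_add) (use insert lie_scale in auto)
  then show ?case using insert by simp
qed

lemma count_sum: "finite W \<Longrightarrow> set L \<subseteq> W \<Longrightarrow> (\<Sum>w\<in>W. h w * real (count_list L w)) = sum_list (map h L)"
proof (induction L)
  case Nil then show ?case by simp
next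
  case (Cons a L)
  have "(\<Sum>w\<in>W. h w * real (count_list (a # L) w)) = (\<Sum>w\<in>W. h w * real (count_list L w)) + (\<Sum>w\<in>W. if a = w then h w else 0)"
    by (simp add: sum.distrib[symmetric], intro sum.cong) (auto simp: algebra_simps)
  also have "\<dots> = sum_list (map h L) + h a" using Cons by (simp add: sum.delta)
  finally show ?case by simp
qed

lemma sum_list_div: "sum_list (map (\<lambda>w. h w / (c::real)) L) = sum_list (map h L) / c"
  by (induction L) (auto simp: add_divide_distrib)

lemma finite_words: "finite (words d N)"
  unfolding words_def by (rule finite_lists_length_le) simp

lemma friedrichs:
  assumes x0: "x [] = 0"
    and prim: "\<forall>v w. v \<noteq> [] \<longrightarrow> w \<noteq> [] \<longrightarrow> set v \<subseteq> {1..d} \<longrightarrow> set w \<subseteq> {1..d} \<longrightarrow>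
        length v + length w \<le> N \<longrightarrow> pair x (shuffle v w) = 0"
  shows "\<exists>l\<in>lie d. \<forall>z\<in>words d N. proj N l z = x z"
proof -
  define W where "W = words d N - {[]}"
  have fW: "finite W" unfolding W_def using finite_words by simp
  define l where "l = (\<lambda>z. \<Sum>w\<in>W. (x w / real (length w)) * R w z)"
  have "l \<in> lie d" unfolding l_def
    by (rule lie_sum[OF fW]) (simp add: W_def words_def R_lie)
  moreover have "proj N l z = x z" if z: "z \<in> words d N" for z
  proof -
    have pz: "proj N l z = l z" using z by (simp add: proj_def words_def)
    show ?thesis
    proof (cases "z = []")
      case True
      have "l [] = 0" unfolding l_def by (intro sum.neutral) (simp add: R_formula W_def)
      then show ?thesis using pz True x0 by simp
    next
      case zne: False
      define n where "n = length z"
      have npos: "n > 0" using zne n_def by simp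
      have inW: "set (S k z) \<subseteq> W \<and> (\<forall>y\<in>set (S k z). length y = n)" if "k \<le> n" for k
      proof -
        have "length y = n \<and> set y \<subseteq> set z" if y: "y \<in> set (S k z)" for y
        proof -
          have h: "length y = length (rev (take k z)) + length (drop k z) \<and> set y \<subseteq> set (rev (take k z)) \<union> set (drop k z)"
            using shuffle_len y unfolding S_def by blast
          have "set (rev (take k z)) \<union> set (drop k z) \<subseteq> set z"
            using set_take_subset set_drop_subset by (metis Un_subset_iff set_rev)
          then show ?thesis using h \<open>k \<le> n\<close> unfolding n_def by auto
        qed
        then show ?thesis using z npos unfolding W_def words_def n_def by fastforce
      qed
      have "l z = (\<Sum>w\<in>W. \<Sum>k\<le>n. (x w / real (length w)) * ((-1::real) ^ k * real (n - k) * count_list (S k z) w))"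
        unfolding l_def n_def
      proof (intro sum.cong refl)
        fix w assume "w \<in> W"
        then have "w \<noteq> []" by (simp add: W_def)
        then show "x w / real (length w) * R w z = (\<Sum>k\<le>length z. x w / real (length w) * ((-1::real) ^ k * real (length z - k) * count_list (S k z) w))"
          by (simp only: R_formula[OF \<open>w \<noteq> []\<close>] sum_distrib_left)
      qed
      also have "\<dots> = (\<Sum>k\<le>n. (-1::real) ^ k * real (n - k) * (\<Sum>w\<in>W. (x w / real (length w)) * count_list (S k z) w))"
        by (subst sum.swap) (simp only: sum_distrib_left mult.assoc mult.left_commute)
      also have "\<dots> = (\<Sum>k\<le>n. (-1::real) ^ k * real (n - k) * (pair x (S k z) / n))"
      proof (intro sum.cong refl)
        fix k assume "k \<in> {..n}"
        then have k: "k \<le> n" by simp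
        have "(\<Sum>w\<in>W. (x w / real (length w)) * count_list (S k z) w) = sum_list (map (\<lambda>w. x w / real (length w)) (S k z))"
          by (rule count_sum[OF fW]) (use inW[OF k] in auto)
        also have "\<dots> = sum_list (map (\<lambda>w. x w / real n) (S k z))"
          by (rule arg_cong[where f = sum_list], rule map_cong) (use inW[OF k] in auto)
        also have "\<dots> = pair x (S k z) / n" by (simp add: sum_list_div pair_def)
        finally show "(-1::real) ^ k * real (n - k) * (\<Sum>w\<in>W. (x w / real (length w)) * count_list (S k z) w) =
           (-1::real) ^ k * real (n - k) * (pair x (S k z) / n)" by simp
      qed
      also have "\<dots> = (\<Sum>k\<le>n. if k = 0 then x z else 0)"
      proof (intro sum.cong refl)
        fix k assume "k \<in> {..n}"
        then have k: "k \<le> n" by simp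
        show "(-1::real) ^ k * real (n - k) * (pair x (S k z) / n) = (if k = 0 then x z else 0)"
        proof (cases "k = 0")
          case True
          then show ?thesis using npos by (simp add: S_def shuffle_def pair_def)
        next
          case False
          show ?thesis
          proof (cases "k = n")
            case True then show ?thesis using False by simp
          next
            case kn: False
            have zs: "set z \<subseteq> {1..d}" "length z \<le> N" using z by (auto simp: words_def)
            have "rev (take k z) \<noteq> []" using False k npos n_def by simp
            moreover have "drop k z \<noteq> []" using kn k n_def by simp
            moreover have "set (rev (take k z)) \<subseteq> {1..d}" using zs(1) set_take_subset by fastforce
            moreover have "set (drop k z) \<subseteq> {1..d}" using zs(1) set_drop_subset by fastforce
            moreover have "length (rev (take k z)) + length (drop k z) \<le> N" using zs(2) k n_def by simp
            ultimately have "pair x (S k z) = 0" unfolding S_def using prim by blast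
            then show ?thesis using False by simp
          qed
        qed
      qed
      also have "\<dots> = x z" by (simp add: sum.delta)
      finally show ?thesis using pz by simp
    qed
  qed
  ultimately show ?thesis by blast
qed

lemma smooth_hasd:
  fixes g :: "real \<Rightarrow> real"
  assumes "smooth_on {0..T} g" "T > 0" "s \<in> {0..T}"
  shows "(g has_vector_derivative vector_derivative g (at s within {0..T})) (at s within {0..T})"
proof -
  obtain D where D: "\<forall>x\<in>{0..T}. D 0 x = g x"
     "\<forall>k. \<forall>x\<in>{0..T}. (D k has_vector_derivative D (Suc k) x) (at x within {0..T})"
    using assms(1) unfolding smooth_on_def by blast
  have "(g has_vector_derivative D 1 s) (at s within {0..T})"
    using has_vector_derivative_transform[OF assms(3), of g "D 0"] D assms(3) by simp
  moreover have "vector_derivative g (at s within {0..T}) = D 1 s"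
    using vector_derivative_within_closed_interval[OF assms(2) assms(3)] calculation by blast
  ultimately show ?thesis by simp
qed

lemma vd_unique:
  fixes g :: "real \<Rightarrow> real"
  assumes "T > 0" "s \<in> {0..T}" "(g has_vector_derivative a) (at s within {0..T})"
    "(h has_vector_derivative b) (at s within {0..T})" "\<And>t. t \<in> {0..T} \<Longrightarrow> g t = h t"
  shows "a = b"
proof -
  have "(g has_vector_derivative b) (at s within {0..T})"
    using has_vector_derivative_transform[OF assms(2), of g h] assms by simp
  then show ?thesis using vector_derivative_within_closed_interval[OF assms(1) assms(2)] assms(3) by metis
qed

lemma hasd_sum_list:
  "(\<forall>u\<in>set L. ((\<lambda>t. F t u) has_vector_derivative F' u) net) \<Longrightarrow>
   ((\<lambda>t. sum_list (map (F t) L) :: real) has_vector_derivative sum_list (map F' L)) net"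
proof (induction L)
  case Nil then show ?case by (simp add: has_vector_derivative_const)
next
  case (Cons a L) then show ?case by (simp add: has_vector_derivative_add)
qed

lemma Nsgrm_empty:
  assumes X: "Nsgrm d N T X" and s: "s \<in> {0..T}" and t: "t \<in> {0..T}"
  shows "X s t [] = 1"
proof -
  from X have nz: "\<exists>s\<in>{0..T}. \<exists>t\<in>{0..T}. X s t \<noteq> (\<lambda>w. 0)"
    and supp: "\<forall>s\<in>{0..T}. \<forall>t\<in>{0..T}. in_TN d N (X s t)"
    and sh: "\<forall>s\<in>{0..T}. \<forall>t\<in>{0..T}. \<forall>v w. set v \<subseteq> {1..d} \<longrightarrow> set w \<subseteq> {1..d} \<longrightarrow>
        length v + length w \<le> N \<longrightarrow> pair (X s t) (shuffle v w) = X s t v * X s t w"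
    and chen: "\<forall>s\<in>{0..T}. \<forall>u\<in>{0..T}. \<forall>t\<in>{0..T}. tmulN N (X s u) (X u t) = X s t"
    unfolding Nsgrm_def by blast+
  have ch0: "X a c [] = X a b [] * X b c []" if "a \<in> {0..T}" "b \<in> {0..T}" "c \<in> {0..T}" for a b c
  proof -
    have "tmulN N (X a b) (X b c) [] = X a c []" using chen that by simp
    then show ?thesis by (simp add: tmulN_def tmul_def)
  qed
  have zero: "X a b = (\<lambda>w. 0)" if "a \<in> {0..T}" "b \<in> {0..T}" "X a b [] = 0" for a b
  proof
    fix w
    show "X a b w = 0"
    proof (cases "w \<in> words d N")
      case True
      then have "pair (X a b) (shuffle [] w) = X a b [] * X a b w" using sh that by (auto simp: words_def)
      then show ?thesis using that by (simp add: shuffle_def pair_def)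
    next
      case False then show ?thesis using supp that by (auto simp: in_TN_def)
    qed
  qed
  obtain s0 t0 where st0: "s0 \<in> {0..T}" "t0 \<in> {0..T}" "X s0 t0 \<noteq> (\<lambda>w. 0)" using nz by blast
  have "X s0 t0 [] \<noteq> 0" using zero st0 by blast
  moreover have "X s0 t0 [] = X s0 s [] * X s t [] * X t t0 []" using ch0 st0 s t by metis
  ultimately have "X s t [] \<noteq> 0" by auto
  moreover have "pair (X s t) (shuffle [] []) = X s t [] * X s t []" using sh s t by auto
  then have "X s t [] = X s t [] * X s t []" by (simp add: shuffle_def pair_def)
  ultimately show ?thesis by simp
qed

lemma Nsgrm_diag:
  assumes X: "Nsgrm d N T X" and s: "s \<in> {0..T}"
  shows "w \<noteq> [] \<Longrightarrow> X s s w = 0"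
proof (induction w rule: length_induct)
  case (1 w)
  show ?case
  proof (cases "length w \<le> N")
    case False
    then show ?thesis using X s unfolding Nsgrm_def in_TN_def words_def by auto
  next
    case True
    have chen: "tmulN N (X s s) (X s s) = X s s" using X s unfolding Nsgrm_def by blast
    have e: "X s s [] = 1" using Nsgrm_empty[OF X s s] .
    have "\<And>i. i \<in> {..length w} \<Longrightarrow> X s s (take i w) * X s s (drop i w) =
       (if i = 0 then X s s w else 0) + (if i = length w then X s s w else 0)"
    proof -
      fix i assume "i \<in> {..length w}"
      then have i: "i \<le> length w" by simp
      show "X s s (take i w) * X s s (drop i w) =
       (if i = 0 then X s s w else 0) + (if i = length w then X s s w else 0)"
      proof (cases "i = 0 \<or> i = length w")
        case True then show ?thesis using e 1(2) by auto
      next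
        case False
        then have "take i w \<noteq> []" "length (take i w) < length w" using i by auto
        then have "X s s (take i w) = 0" using 1(1) by blast
        then show ?thesis using False by simp
      qed
    qed
    then have "tmul (X s s) (X s s) w = (\<Sum>i\<in>{..length w}. (if i = 0 then X s s w else 0) + (if i = length w then X s s w else 0))"
      unfolding tmul_def by (rule sum.cong[OF refl])
    also have "\<dots> = 2 * X s s w" by (simp add: sum.distrib sum.delta)
    finally have "tmul (X s s) (X s s) w = 2 * X s s w" .
    moreover have "tmul (X s s) (X s s) w = X s s w" using chen True
      by (metis tmulN_def)
    ultimately show ?thesis by simp
  qed
qed

lemma Nsgrm_lieN:
  assumes X: "Nsgrm d N T X" and T: "T > 0" and s: "s \<in> {0..T}"
  shows "\<exists>y\<in>lieN d N. \<forall>w\<in>words d N. y w = diag_deriv T X s w"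
proof -
  define x where "x = diag_deriv T X s"
  have sm: "\<And>w. smooth_on {0..T} (\<lambda>t. X s t w)" using X s unfolding Nsgrm_def by blast
  have hd: "\<And>w. ((\<lambda>t. X s t w) has_vector_derivative x w) (at s within {0..T})"
    unfolding x_def diag_deriv_def using smooth_hasd[OF sm T s] .
  have sh: "\<forall>t\<in>{0..T}. \<forall>v w. set v \<subseteq> {1..d} \<longrightarrow> set w \<subseteq> {1..d} \<longrightarrow>
        length v + length w \<le> N \<longrightarrow> pair (X s t) (shuffle v w) = X s t v * X s t w"
    using X s unfolding Nsgrm_def by blast
  have x0: "x [] = 0"
    by (rule vd_unique[OF T s hd[of "[]"] has_vector_derivative_const[of 1]])
       (use Nsgrm_empty[OF X s] in auto)
  have prim: "\<forall>v w. v \<noteq> [] \<longrightarrow> w \<noteq> [] \<longrightarrow> set v \<subseteq> {1..d} \<longrightarrow> set w \<subseteq> {1..d} \<longrightarrow>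
        length v + length w \<le> N \<longrightarrow> pair x (shuffle v w) = 0"
  proof (intro allI impI)
    fix v w :: "nat list"
    assume vw: "v \<noteq> []" "w \<noteq> []" "set v \<subseteq> {1..d}" "set w \<subseteq> {1..d}" "length v + length w \<le> N"
    have h1: "((\<lambda>t. pair (X s t) (shuffle v w)) has_vector_derivative pair x (shuffle v w)) (at s within {0..T})"
      unfolding pair_def by (rule hasd_sum_list) (use hd in auto)
    have h2: "((\<lambda>t. X s t v * X s t w) has_vector_derivative (X s s v * x w + x v * X s s w)) (at s within {0..T})"
      by (rule has_vector_derivative_mult[OF hd hd])
    have "pair x (shuffle v w) = X s s v * x w + x v * X s s w"
      by (rule vd_unique[OF T s h1 h2]) (use sh vw in auto)
    then show "pair x (shuffle v w) = 0" using Nsgrm_diag[OF X s] vw by simp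
  qed
  obtain l where l: "l \<in> lie d" "\<forall>z\<in>words d N. proj N l z = x z"
    using friedrichs[OF x0 prim] by blast
  then show ?thesis unfolding x_def lieN_def by blast
qed

lemma expand:
  assumes B: "onb_lieN d N B" and y: "y \<in> lieN d N" and xy: "\<forall>w\<in>words d N. y w = x w"
  shows "\<forall>w\<in>words d N. x w = (\<Sum>u\<in>B. ipN d N x u * u w)"
proof -
  have fB: "finite B" and orth: "\<forall>u\<in>B. \<forall>v\<in>B. ipN d N u v = (if u = v then 1 else 0)"
    and sp: "\<forall>x\<in>lieN d N. \<exists>c. x = (\<lambda>w. \<Sum>u\<in>B. c u * u w)"
    using B unfolding onb_lieN_def by blast+
  obtain c where c: "y = (\<lambda>w. \<Sum>u\<in>B. c u * u w)" using sp y by blast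
  have ip: "ipN d N x v = c v" if v: "v \<in> B" for v
  proof -
    have "ipN d N x v = ipN d N y v" unfolding ipN_def using xy by simp
    also have "\<dots> = (\<Sum>w\<in>words d N. \<Sum>u\<in>B. c u * u w * v w)"
      unfolding ipN_def c by (simp add: sum_distrib_right)
    also have "\<dots> = (\<Sum>u\<in>B. c u * ipN d N u v)"
      unfolding ipN_def by (subst sum.swap) (simp add: sum_distrib_left mult.assoc)
    also have "\<dots> = (\<Sum>u\<in>B. if u = v then c v else 0)"
      using orth v by (intro sum.cong refl) auto
    also have "\<dots> = c v" using v fB by (simp add: sum.delta)
    finally show ?thesis .
  qed
  show ?thesis
  proof
    fix w assume w: "w \<in> words d N"
    have "x w = y w" using xy w by simp
    also have "\<dots> = (\<Sum>u\<in>B. ipN d N x u * u w)" unfolding c using ip by simp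
    finally show "x w = (\<Sum>u\<in>B. ipN d N x u * u w)" .
  qed
qed

theorem lemma2p21:
  fixes T :: real and d N :: nat
    and f :: "nat \<Rightarrow> 'e::euclidean_space \<Rightarrow> 'e"
    and X :: "real \<Rightarrow> real \<Rightarrow> nat list \<Rightarrow> real"
    and B :: "(nat list \<Rightarrow> real) set"
    and Y :: "real \<Rightarrow> 'e"
  assumes "T > 0" and "d \<ge> 1"
    and "\<forall>i\<in>{1..d}. smooth_bdd_field (f i)"
    and "Nsgrm d N T X \<or> (good_sgrm d T X \<and> (\<forall>s\<in>{0..T}. diag_deriv T X s \<in> lieN d N))"
    and "onb_lieN d N B"
    and "smooth_on {0..T} Y"
  shows "solves T d N f X Y \<longleftrightarrow>
    (\<forall>s\<in>{0..T}. vector_derivative Y (at s within {0..T})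
       = (\<Sum>u\<in>B. ipN d N (diag_deriv T X s) u *\<^sub>R fx f d N u (Y s)))"
proof -
  have fB: "finite B" using assms(5) unfolding onb_lieN_def by blast
  have key: "(\<Sum>w\<in>words d N. diag_deriv T X s w *\<^sub>R fw f w (Y s))
     = (\<Sum>u\<in>B. ipN d N (diag_deriv T X s) u *\<^sub>R fx f d N u (Y s))" if s: "s \<in> {0..T}" for s
  proof -
    define x where "x = diag_deriv T X s"
    have "\<exists>y\<in>lieN d N. \<forall>w\<in>words d N. y w = x w"
      using assms(4) Nsgrm_lieN[OF _ assms(1) s] s unfolding x_def by blast
    then have ex: "\<forall>w\<in>words d N. x w = (\<Sum>u\<in>B. ipN d N x u * u w)"
      using expand[OF assms(5)] by blast
    have "(\<Sum>w\<in>words d N. x w *\<^sub>R fw f w (Y s))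
       = (\<Sum>w\<in>words d N. \<Sum>u\<in>B. (ipN d N x u * u w) *\<^sub>R fw f w (Y s))"
      using ex by (intro sum.cong refl) (simp add: scaleR_sum_left)
    also have "\<dots> = (\<Sum>u\<in>B. ipN d N x u *\<^sub>R fx f d N u (Y s))"
      unfolding fx_def by (subst sum.swap) (simp add: scaleR_sum_right)
    finally show ?thesis unfolding x_def .
  qed
  show ?thesis unfolding solves_def using assms(6) key by simp
qed

end
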